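(* Let $3\le k\le d+1$. For $x_1,\ldots,x_k\in\mathbb S^{d-1}$ write $u_{i,j}=\langle x_i,x_j\rangle$, let $W$ be the Gram matrix of $x_3,\ldots,x_k$, $\operatorname{adj}(W)$ its adjugate, and $w_h=(u_{h,3},\ldots,u_{h,k})^T$ for $h=1,2$. Then the kernel $$Q_{k,1}^d(x_1,\ldots,x_k)=\det(W)\,u_{1,2}-w_1^T\operatorname{adj}(W)\,w_2$$ (which equals $\det(W)\langle y_1,y_2\rangle$, where $y_1,y_2$ are the orthogonal projections of $x_1,x_2$ onto the orthogonal complement of $\operatorname{span}\{x_3,\ldots,x_k\}$) is $k$-positive definite, and $I_{Q_{k,1}^d}$ is minimized over $\mathcal P(\mathbb S^{d-1})$ by $\sigma$.
   Context: $\mathbb S^{d-1}$ is the unit sphere in $\mathbb R^d$, $\mathcal P(\mathbb S^{d-1})$ the Borel probability measures, $\sigma$ the normalized surface measure; $I_K(\mu)=\int\cdots\int K(x_1,\ldots,x_k)\,d\mu(x_1)\cdots d\mu(x_k)$. A continuous kernel $K:(\mathbb S^{d-1})^k\to\mathbb R$ symmetric in its first two variables is $k$-positive definite if for all fixed $z_3,\ldots,z_k\in\mathbb S^{d-1}$ and every finite signed Borel measure $\nu$ on $\mathbb S^{d-1}$, $\int\int K(x,y,z_3,\ldots,z_k)\,d\nu(x)d\nu(y)\ge0$. *)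

theory Defs
  imports "HOL-Analysis.Analysis" "HOL-Probability.Probability"
begin

text \<open>Adjugate (classical adjoint) of a square matrix: entry (i,j) is the (j,i) cofactor,
  i.e. the determinant of the matrix obtained by replacing row j by the i-th unit row.\<close>
definition adjugate :: "real^'n^'n \<Rightarrow> real^'n^'n" where
  "adjugate A = (\<chi> i j. det (\<chi> r. if r = j then axis i 1 else A $ r))"

text \<open>Normalized surface measure on the unit sphere of a Euclidean space, realised as the
  cone measure: push forward of the normalized Lebesgue measure on the unit ball under
  radial projection.\<close>
definition sphere_measure :: "'a::euclidean_space measure" where
  "sphere_measure = distr (uniform_measure lborel (ball 0 1)) borel sgn"

definition sphere_prob :: "'a::euclidean_space measure \<Rightarrow> bool" where
  "sphere_prob \<mu> \<longleftrightarrow> sets \<mu> = sets borel \<and> prob_space \<mu> \<and> emeasure \<mu> (sphere 0 1) = 1"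

text \<open>Finite (nonnegative) Borel measures on the sphere; a finite signed Borel measure is
  a difference of two such (Jordan decomposition).\<close>
definition sphere_finite :: "'a::euclidean_space measure \<Rightarrow> bool" where
  "sphere_finite \<nu> \<longleftrightarrow> sets \<nu> = sets borel \<and> finite_measure \<nu> \<and> emeasure \<nu> (- sphere 0 1) = 0"

text \<open>A k-point kernel K(x_1,x_2,z_3,...,z_k), the last k-2 arguments indexed by the
  finite type 'k (so k = CARD('k) + 2).\<close>
definition k_pos_def :: "('a::euclidean_space \<Rightarrow> 'a \<Rightarrow> ('k::finite \<Rightarrow> 'a) \<Rightarrow> real) \<Rightarrow> bool" where
  "k_pos_def K \<longleftrightarrow>
     continuous_on (sphere 0 1 \<times> sphere 0 1 \<times> {z. \<forall>i. z i \<in> sphere 0 1}) (\<lambda>(x, y, z). K x y z)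
   \<and> (\<forall>x y z. K x y z = K y x z)
   \<and> (\<forall>z. (\<forall>i. z i \<in> sphere 0 1) \<longrightarrow>
        (\<forall>\<nu>1 \<nu>2. sphere_finite \<nu>1 \<and> sphere_finite \<nu>2 \<longrightarrow>
           0 \<le> (\<integral>x. (\<integral>y. K x y z \<partial>\<nu>1) \<partial>\<nu>1) - (\<integral>x. (\<integral>y. K x y z \<partial>\<nu>2) \<partial>\<nu>1)
              - (\<integral>x. (\<integral>y. K x y z \<partial>\<nu>1) \<partial>\<nu>2) + (\<integral>x. (\<integral>y. K x y z \<partial>\<nu>2) \<partial>\<nu>2)))"

definition kernel_energy :: "('a::euclidean_space \<Rightarrow> 'a \<Rightarrow> ('k::finite \<Rightarrow> 'a) \<Rightarrow> real) \<Rightarrow> 'a measure \<Rightarrow> real" where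
  "kernel_energy K \<mu> = (\<integral>x. (\<integral>y. (\<integral>z. K x y z \<partial>(PiM UNIV (\<lambda>_. \<mu>))) \<partial>\<mu>) \<partial>\<mu>)"

definition Q_kernel :: "'a::euclidean_space \<Rightarrow> 'a \<Rightarrow> ('k::finite \<Rightarrow> 'a) \<Rightarrow> real" where
  "Q_kernel x1 x2 z =
     (let W = (\<chi> i j. z i \<bullet> z j) :: real^'k^'k;
          w1 = (\<chi> i. x1 \<bullet> z i) :: real^'k;
          w2 = (\<chi> i. x2 \<bullet> z i) :: real^'k
      in det W * (x1 \<bullet> x2) - w1 \<bullet> (adjugate W *v w2))"

end

theory Submission
  imports Defs
begin

lemma adj_right:
  fixes A :: "real^'n^'n"
  shows "(\<Sum>k\<in>UNIV. A$i$k * adjugate A $ k $ j) = (if i = j then det A else 0)"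
proof -
  have "(\<Sum>k\<in>UNIV. A$i$k * adjugate A $ k $ j) =
     (\<Sum>k\<in>UNIV. det (\<chi> r. if r = j then A$i$k *s axis k 1 else A $ r))"
    unfolding adjugate_def by (simp add: det_row_mul)
  also have "\<dots> = det (\<chi> r. if r = j then (\<Sum>k\<in>UNIV. A$i$k *s axis k 1) else A $ r)"
    by (rule det_linear_row_sum[symmetric]) simp
  also have "(\<Sum>k\<in>UNIV. A$i$k *s axis k 1) = A$i"
    by (simp add: vec_eq_iff axis_def sum.delta' if_distrib cong: if_cong)
  also have "det (\<chi> r. if r = j then A$i else A $ r) = (if i = j then det A else 0)"
  proof (cases "i = j")
    case True
    have "(\<chi> r. if r = j then A$i else A $ r) = A" using True by (simp add: vec_eq_iff)
    then show ?thesis using True by simp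
  next
    case False
    show ?thesis using False
      by (subst det_identical_rows[of i j]) (auto simp: row_def vec_eq_iff)
  qed
  finally show ?thesis .
qed

lemma quad_sum:
  fixes z :: "'k::finite \<Rightarrow> 'a::euclidean_space" and v :: "real^'k"
  shows "(\<Sum>i\<in>UNIV. \<Sum>j\<in>UNIV. v$i * v$j * (z i \<bullet> z j)) =
     (\<Sum>i\<in>UNIV. v$i *\<^sub>R z i) \<bullet> (\<Sum>j\<in>UNIV. v$j *\<^sub>R z j)"
  unfolding inner_sum_left inner_sum_right by (intro sum.cong refl) (auto simp: algebra_simps inner_commute)

lemma gram_inj:
  fixes z :: "'k::finite \<Rightarrow> 'a::euclidean_space"
  assumes "0 \<le> s" "s < 1"
  shows "det ((\<chi> i j. s * (z i \<bullet> z j) + (1-s) * (if i = j then 1 else 0)) :: real^'k^'k) \<noteq> 0"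
proof -
  define A where "A = ((\<chi> i j. s * (z i \<bullet> z j) + (1-s) * (if i = j then 1 else 0)) :: real^'k^'k)"
  have "\<forall>v. A *v v = 0 \<longrightarrow> v = 0"
  proof (intro allI impI)
    fix v assume h: "A *v v = 0"
    have Av: "(A *v v)$i = s * (\<Sum>j\<in>UNIV. (z i \<bullet> z j) * v$j) + (1-s) * v$i" for i
    proof -
      have "(A *v v)$i = (\<Sum>j\<in>UNIV. s * (z i \<bullet> z j) * v$j + (if i = j then (1-s) * v$j else 0))"
        unfolding A_def matrix_vector_mult_def by (auto intro!: sum.cong simp: algebra_simps)
      also have "\<dots> = s * (\<Sum>j\<in>UNIV. (z i \<bullet> z j) * v$j) + (1-s) * v$i"
        by (simp add: sum.distrib sum_distrib_left mult.assoc)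
      finally show ?thesis .
    qed
    have "v \<bullet> (A *v v) = s * (\<Sum>i\<in>UNIV. \<Sum>j\<in>UNIV. v$i * v$j * (z i \<bullet> z j)) + (1-s) * (v \<bullet> v)"
      by (simp add: Av inner_vec_def sum.distrib sum_distrib_left algebra_simps sum_subtractf)
    also have "\<dots> = s * ((\<Sum>i\<in>UNIV. v$i *\<^sub>R z i) \<bullet> (\<Sum>j\<in>UNIV. v$j *\<^sub>R z j)) + (1-s) * (v \<bullet> v)"
      by (simp add: quad_sum)
    finally have e: "0 = s * ((\<Sum>i\<in>UNIV. v$i *\<^sub>R z i) \<bullet> (\<Sum>j\<in>UNIV. v$j *\<^sub>R z j)) + (1-s) * (v \<bullet> v)"
      using h by simp
    have "0 \<le> s * ((\<Sum>i\<in>UNIV. v$i *\<^sub>R z i) \<bullet> (\<Sum>j\<in>UNIV. v$j *\<^sub>R z j))"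
      using assms by simp
    moreover have "0 \<le> v \<bullet> v" by simp
    ultimately have "(1-s) * (v \<bullet> v) = 0" using e assms
      by (smt (verit) mult_nonneg_nonneg)
    then show "v = 0" using assms by simp
  qed
  then have "invertible A"
    using matrix_left_invertible_ker invertible_left_inverse by blast
  then show ?thesis using invertible_det_nz A_def by blast
qed

lemma gram_det_nonneg:
  fixes z :: "'k::finite \<Rightarrow> 'a::euclidean_space"
  shows "0 \<le> det ((\<chi> i j. z i \<bullet> z j) :: real^'k^'k)"
proof (rule ccontr)
  assume neg: "\<not> ?thesis"
  define f where "f s = det ((\<chi> i j. s * (z i \<bullet> z j) + (1-s) * (if i = j then 1 else 0)) :: real^'k^'k)" for s :: real
  have c: "continuous_on {0..1} f"
    unfolding f_def det_def by (auto intro!: continuous_intros)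
  have f1: "f 1 = det ((\<chi> i j. z i \<bullet> z j) :: real^'k^'k)" by (simp add: f_def)
  have f0: "f 0 = 1"
  proof -
    have "((\<chi> i j. 0 * (z i \<bullet> z j) + (1-0) * (if i = j then 1 else 0)) :: real^'k^'k) = mat 1"
      by (simp add: mat_def)
    then show ?thesis by (simp add: f_def)
  qed
  obtain x where x: "0 \<le> x" "x \<le> 1" "f x = 0"
    using IVT2'[of f 1 0 0] c f0 f1 neg by auto
  have "x \<noteq> 1" using x f1 neg by auto
  then show False using gram_inj[of x z] x f_def by auto
qed

definition Wm :: "('k::finite \<Rightarrow> 'a::euclidean_space) \<Rightarrow> real^'k^'k" where
  "Wm z = (\<chi> i j. z i \<bullet> z j)"
definition wv :: "'a::euclidean_space \<Rightarrow> ('k::finite \<Rightarrow> 'a) \<Rightarrow> real^'k" where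
  "wv x z = (\<chi> i. x \<bullet> z i)"

lemma Q_alt: "Q_kernel x y z = det (Wm z) * (x \<bullet> y) - wv x z \<bullet> (adjugate (Wm z) *v wv y z)"
  by (simp add: Q_kernel_def Let_def Wm_def wv_def)

lemma Q_sing:
  fixes z :: "'k::finite \<Rightarrow> 'a::euclidean_space"
  assumes d: "det (Wm z) = 0"
  shows "wv x z \<bullet> (adjugate (Wm z) *v wv y z) = 0"
proof -
  define adj where "adj = adjugate (Wm z)"
  define u where "u j = (\<Sum>i\<in>UNIV. adj$i$j *\<^sub>R z i)" for j
  have ur: "u j \<bullet> z r = 0" for j r
  proof -
    have "u j \<bullet> z r = (\<Sum>i\<in>UNIV. adj$i$j * (z i \<bullet> z r))"
      by (simp add: u_def inner_sum_left)
    also have "\<dots> = (\<Sum>i\<in>UNIV. Wm z $ r $ i * adj$i$j)"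
      by (simp add: Wm_def inner_commute mult.commute)
    also have "\<dots> = 0" using adj_right[of "Wm z" r j] d by (simp add: adj_def)
    finally show ?thesis .
  qed
  have u0: "u j = 0" for j
  proof -
    have "u j \<bullet> u j = (\<Sum>r\<in>UNIV. adj$r$j * (z r \<bullet> u j))"
      by (simp add: u_def inner_sum_left)
    also have "\<dots> = 0" using ur by (simp add: inner_commute)
    finally show ?thesis by simp
  qed
  have "wv x z \<bullet> (adj *v wv y z) = (\<Sum>i\<in>UNIV. \<Sum>j\<in>UNIV. (x \<bullet> z i) * (adj$i$j * (y \<bullet> z j)))"
    by (simp add: inner_vec_def matrix_vector_mult_def wv_def sum_distrib_left)
  also have "\<dots> = (\<Sum>j\<in>UNIV. (y \<bullet> z j) * (x \<bullet> u j))"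
    by (subst sum.swap) (simp add: u_def inner_sum_right sum_distrib_left algebra_simps)
  also have "\<dots> = 0" by (simp add: u0)
  finally show ?thesis by (simp add: adj_def)
qed

lemma sym_mat_inner:
  fixes W :: "real^'k::finite^'k"
  assumes "\<And>i j. W$i$j = W$j$i"
  shows "(W *v a) \<bullet> b = a \<bullet> (W *v b)"
proof -
  have "(W *v a) \<bullet> b = (\<Sum>i\<in>UNIV. \<Sum>j\<in>UNIV. W$i$j * a$j * b$i)"
    by (simp add: inner_vec_def matrix_vector_mult_def sum_distrib_right)
  also have "\<dots> = (\<Sum>j\<in>UNIV. \<Sum>i\<in>UNIV. W$j$i * a$j * b$i)"
    by (subst sum.swap) (simp add: assms)
  also have "\<dots> = a \<bullet> (W *v b)"
    by (simp add: inner_vec_def matrix_vector_mult_def sum_distrib_left algebra_simps)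
  finally show ?thesis .
qed

definition cv where "cv x z = (1 / det (Wm z)) *\<^sub>R (adjugate (Wm z) *v wv x z)"

lemma Q_nonsing:
  fixes z :: "'k::finite \<Rightarrow> 'a::euclidean_space"
  assumes d: "det (Wm z) \<noteq> 0"
  shows "Wm z *v cv x z = wv x z"
    and "Q_kernel x y z = det (Wm z) * (x \<bullet> y) - det (Wm z) * (cv x z \<bullet> wv y z)"
    and "cv x z \<bullet> wv y z = cv y z \<bullet> wv x z"
proof -
  define c where "c = (\<lambda>x. cv x z)"
  note c_def' = cv_def
  define adj where "adj = adjugate (Wm z)"
  have Wc: "Wm z *v c x = wv x z" for x
  proof -
    have "(Wm z *v (adj *v wv x z)) = det (Wm z) *\<^sub>R wv x z"
      unfolding vec_eq_iff
    proof (intro allI)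
      fix i
      have "(Wm z *v (adj *v wv x z))$i = (\<Sum>k\<in>UNIV. \<Sum>j\<in>UNIV. Wm z$i$k * adj$k$j * wv x z $ j)"
        by (simp add: matrix_vector_mult_def sum_distrib_left mult.assoc)
      also have "\<dots> = (\<Sum>j\<in>UNIV. (\<Sum>k\<in>UNIV. Wm z$i$k * adj$k$j) * wv x z $ j)"
        by (subst sum.swap) (simp add: sum_distrib_right)
      also have "\<dots> = (\<Sum>j\<in>UNIV. (if i = j then det (Wm z) else 0) * wv x z $ j)"
        using adj_right[of "Wm z" i] by (simp add: adj_def)
      also have "\<dots> = (\<Sum>j\<in>UNIV. if i = j then det (Wm z) * wv x z $ j else 0)"
        by (intro sum.cong) auto
      also have "\<dots> = (det (Wm z) *\<^sub>R wv x z) $ i"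
        by simp
      finally show "(Wm z *v (adj *v wv x z))$i = (det (Wm z) *\<^sub>R wv x z) $ i" .
    qed
    then show ?thesis using d
      by (simp add: c_def cv_def adj_def matrix_vector_mult_scaleR)
  qed
  then show "Wm z *v cv x z = wv x z" by (simp add: c_def)
  have sy: "wv x z \<bullet> c y = c x \<bullet> wv y z" for x y
    using sym_mat_inner[of "Wm z" "c x" "c y"] Wc[of x] Wc[of y]
    by (simp add: Wm_def inner_commute)
  have "wv x z \<bullet> (adjugate (Wm z) *v wv y z) = det (Wm z) * (wv x z \<bullet> c y)"
    using d by (simp add: c_def cv_def)
  also have "wv x z \<bullet> c y = c x \<bullet> wv y z" by (rule sy)
  finally show "Q_kernel x y z = det (Wm z) * (x \<bullet> y) - det (Wm z) * (cv x z \<bullet> wv y z)"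
    by (simp add: Q_alt c_def)
  show "cv x z \<bullet> wv y z = cv y z \<bullet> wv x z"
    using sy[of x y] sy[of y x] by (simp add: c_def inner_commute)
qed

lemma Q_symm: "Q_kernel x y z = Q_kernel y x z"
proof (cases "det (Wm z) = 0")
  case True
  then show ?thesis by (simp add: Q_alt Q_sing)
next
  case False
  show ?thesis using Q_nonsing(2)[OF False, of x y] Q_nonsing(2)[OF False, of y x]
      Q_nonsing(3)[OF False, of x y]
    by (simp add: inner_commute)
qed

lemma Q_psd: "0 \<le> Q_kernel x x z"
proof (cases "det (Wm z) = 0")
  case True
  then show ?thesis by (simp add: Q_alt Q_sing)
next
  case False
  define c where "c = cv x z"
  have Wc: "Wm z *v c = wv x z" using Q_nonsing(1)[OF False] c_def by simp
  have Q: "Q_kernel x x z = det (Wm z) * (x \<bullet> x - c \<bullet> wv x z)"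
    using Q_nonsing(2)[OF False, of x x] c_def by (simp add: algebra_simps)
  define p where "p = x - (\<Sum>i\<in>UNIV. c$i *\<^sub>R z i)"
  have "p \<bullet> p = x \<bullet> x - 2 * (\<Sum>i\<in>UNIV. c$i * (x \<bullet> z i))
        + (\<Sum>i\<in>UNIV. \<Sum>j\<in>UNIV. c$i * c$j * (z i \<bullet> z j))"
    unfolding p_def quad_sum by (simp add: inner_diff_left inner_diff_right inner_sum_right inner_commute)
  also have "(\<Sum>i\<in>UNIV. \<Sum>j\<in>UNIV. c$i * c$j * (z i \<bullet> z j)) = c \<bullet> (Wm z *v c)"
    by (simp add: inner_vec_def matrix_vector_mult_def Wm_def sum_distrib_left algebra_simps)
  also have "\<dots> = c \<bullet> wv x z" using Wc by simp
  also have "(\<Sum>i\<in>UNIV. c$i * (x \<bullet> z i)) = c \<bullet> wv x z"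
    by (simp add: inner_vec_def wv_def)
  finally have "p \<bullet> p = x \<bullet> x - c \<bullet> wv x z" by simp
  then have "0 \<le> x \<bullet> x - c \<bullet> wv x z" by (metis inner_ge_zero)
  moreover have "0 \<le> det (Wm z)" using gram_det_nonneg[of z] by (simp add: Wm_def)
  ultimately show ?thesis using Q by simp
qed

lemma continuous_on_if_const[continuous_intros]:
  "continuous_on S f \<Longrightarrow> continuous_on S g \<Longrightarrow> continuous_on S (\<lambda>x. if P then f x else g x)"
  by (cases P) simp_all

lemma cont_Q:
  "continuous_on UNIV (\<lambda>p::'a::euclidean_space \<times> 'a \<times> ('k::finite \<Rightarrow> 'a).
      Q_kernel (fst p) (fst (snd p)) (snd (snd p)))"
  unfolding Q_kernel_def Let_def adjugate_def det_def inner_vec_def matrix_vector_mult_def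
  by (simp only: vec_lambda_beta)
     (intro continuous_intros continuous_on_product_then_coordinatewise)

lemma cont_Qz:
  "continuous_on UNIV (\<lambda>z::'k::finite \<Rightarrow> 'a::euclidean_space. Q_kernel a b z)"
proof -
  have "continuous_on UNIV ((\<lambda>p::'a \<times> 'a \<times> ('k \<Rightarrow> 'a).
      Q_kernel (fst p) (fst (snd p)) (snd (snd p))) \<circ> (\<lambda>z. (a, b, z)))"
    by (intro continuous_on_compose continuous_intros) (rule continuous_on_subset[OF cont_Q], simp)
  then show ?thesis by (simp add: o_def)
qed

lemma Q_lin_x: "linear (\<lambda>x. Q_kernel x y z)"
  by (rule linearI) (simp_all add: Q_alt wv_def inner_add_left inner_vec_def sum.distrib
        algebra_simps sum_distrib_left)

lemma lin_expand:
  assumes "linear (f::'a::euclidean_space \<Rightarrow> real)"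
  shows "f x = (\<Sum>a\<in>Basis. (x \<bullet> a) * f a)"
proof -
  have "f x = f (\<Sum>a\<in>Basis. (x \<bullet> a) *\<^sub>R a)" by (simp add: euclidean_representation)
  also have "\<dots> = (\<Sum>a\<in>Basis. (x \<bullet> a) * f a)"
    using assms by (simp add: linear_sum linear_scale o_def)
  finally show ?thesis .
qed

definition Qc where "Qc z a b = Q_kernel a b z"

lemma Q_expand: "Q_kernel x y z = (\<Sum>a\<in>Basis. \<Sum>b\<in>Basis. (x \<bullet> a) * (y \<bullet> b) * Qc z a b)"
proof -
  have "Q_kernel x y z = (\<Sum>a\<in>Basis. (x \<bullet> a) * Q_kernel a y z)"
    by (rule lin_expand[OF Q_lin_x])
  also have "\<dots> = (\<Sum>a\<in>Basis. (x \<bullet> a) * (\<Sum>b\<in>Basis. (y \<bullet> b) * Q_kernel a b z))"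
  proof (intro sum.cong refl arg_cong2[where f="(*)"])
    fix a
    have "Q_kernel a y z = Q_kernel y a z" by (rule Q_symm)
    also have "\<dots> = (\<Sum>b\<in>Basis. (y \<bullet> b) * Q_kernel b a z)" by (rule lin_expand[OF Q_lin_x])
    finally show "Q_kernel a y z = (\<Sum>b\<in>Basis. (y \<bullet> b) * Q_kernel a b z)"
      by (simp add: Q_symm[of _ a])
  qed
  finally show ?thesis by (simp add: Qc_def sum_distrib_left mult.assoc)
qed

definition good :: "'a::euclidean_space measure \<Rightarrow> bool" where
  "good M \<longleftrightarrow> finite_measure M \<and> sets M = sets borel \<and> (AE x in M. x \<in> sphere 0 1)"

definition mean :: "'a::euclidean_space measure \<Rightarrow> 'a \<Rightarrow> real" where
  "mean M a = (\<integral>x. x \<bullet> a \<partial>M)"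

lemma good_int:
  assumes "good M" shows "integrable M (\<lambda>x. x \<bullet> b)"
proof -
  interpret finite_measure M using assms by (simp add: good_def)
  have s: "sets M = sets borel" using assms by (simp add: good_def)
  have "(\<lambda>x. x \<bullet> b) \<in> borel_measurable borel"
    by (intro borel_measurable_continuous_onI continuous_intros)
  then have m: "(\<lambda>x. x \<bullet> b) \<in> borel_measurable M"
    using measurable_cong_sets[OF s refl] by blast
  have ae: "AE x in M. x \<in> sphere 0 1" using assms by (simp add: good_def)
  have "AE x in M. norm (x \<bullet> b) \<le> norm b"
    using ae
  proof (eventually_elim)
    case (elim x)
    then show ?case using Cauchy_Schwarz_ineq2[of x b] by simp
  qed
  then show ?thesis using m by (rule integrable_const_bound)
qed

lemma good_double:
  assumes M1: "good M1" and M2: "good M2"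
  shows "(\<integral>x. (\<integral>y. (\<Sum>a\<in>Basis. \<Sum>b\<in>Basis. (x \<bullet> a) * (y \<bullet> b) * c a b) \<partial>M1) \<partial>M2)
       = (\<Sum>a\<in>Basis. \<Sum>b\<in>Basis. mean M2 a * mean M1 b * c a b)"
proof -
  have inner: "(\<integral>y. (\<Sum>a\<in>Basis. \<Sum>b\<in>Basis. (x \<bullet> a) * (y \<bullet> b) * c a b) \<partial>M1)
      = (\<Sum>a\<in>Basis. \<Sum>b\<in>Basis. (x \<bullet> a) * mean M1 b * c a b)" for x
  proof -
    have "(\<integral>y. (\<Sum>a\<in>Basis. \<Sum>b\<in>Basis. (x \<bullet> a) * (y \<bullet> b) * c a b) \<partial>M1)
       = (\<Sum>a\<in>Basis. (\<integral>y. (\<Sum>b\<in>Basis. (x \<bullet> a) * (y \<bullet> b) * c a b) \<partial>M1))"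
      by (rule Bochner_Integration.integral_sum[where f="\<lambda>a y. \<Sum>b\<in>Basis. (x \<bullet> a) * (y \<bullet> b) * c a b"])
         (intro Bochner_Integration.integrable_sum integrable_mult_left integrable_mult_right good_int[OF M1])
    also have "\<dots> = (\<Sum>a\<in>Basis. \<Sum>b\<in>Basis. (\<integral>y. (x \<bullet> a) * (y \<bullet> b) * c a b \<partial>M1))"
      by (intro sum.cong refl Bochner_Integration.integral_sum[where f="\<lambda>b y. (x \<bullet> _) * (y \<bullet> b) * c _ b"])
       (intro integrable_mult_left integrable_mult_right good_int[OF M1])
    also have "\<dots> = (\<Sum>a\<in>Basis. \<Sum>b\<in>Basis. (x \<bullet> a) * mean M1 b * c a b)"
      by (simp add: mean_def)
    finally show ?thesis .
  qed
  have "(\<integral>x. (\<Sum>a\<in>Basis. \<Sum>b\<in>Basis. (x \<bullet> a) * mean M1 b * c a b) \<partial>M2)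
      = (\<Sum>a\<in>Basis. (\<integral>x. (\<Sum>b\<in>Basis. (x \<bullet> a) * mean M1 b * c a b) \<partial>M2))"
    by (rule Bochner_Integration.integral_sum[where f="\<lambda>a x. \<Sum>b\<in>Basis. (x \<bullet> a) * mean M1 b * c a b"])
       (intro Bochner_Integration.integrable_sum integrable_mult_left integrable_mult_right good_int[OF M2])
  also have "\<dots> = (\<Sum>a\<in>Basis. \<Sum>b\<in>Basis. (\<integral>x. (x \<bullet> a) * mean M1 b * c a b \<partial>M2))"
    by (intro sum.cong refl Bochner_Integration.integral_sum[where f="\<lambda>b x. (x \<bullet> _) * mean M1 b * c _ b"])
       (intro integrable_mult_left integrable_mult_right good_int[OF M2])
  also have "\<dots> = (\<Sum>a\<in>Basis. \<Sum>b\<in>Basis. mean M2 a * mean M1 b * c a b)"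
    by (simp add: mean_def)
  finally show ?thesis by (simp add: inner)
qed

lemma sphere_prob_good: "sphere_prob M \<Longrightarrow> good M"
proof -
  assume h: "sphere_prob M"
  then interpret prob_space M by (simp add: sphere_prob_def)
  have s: "sets M = sets borel" using h by (simp add: sphere_prob_def)
  have sp: "sphere (0::'a) 1 \<in> sets M" using s by simp
  have "emeasure M (space M - sphere 0 1) = 0"
    using h sp emeasure_compl[OF sp] by (simp add: sphere_prob_def emeasure_space_1)
  then have "AE x in M. x \<in> sphere 0 1"
    by (intro AE_I'[of "space M - sphere 0 1"] null_setsI) (auto simp: sp)
  then show ?thesis using s by (simp add: good_def finite_measure_axioms)
qed

lemma sphere_finite_good: "sphere_finite M \<Longrightarrow> good M"
proof -
  assume h: "sphere_finite M"
  have s: "sets M = sets borel" using h by (simp add: sphere_finite_def)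
  have sp: "- sphere (0::'a) 1 \<in> sets M" using s by simp
  have "AE x in M. x \<in> sphere 0 1"
    using h sp by (intro AE_I'[of "- sphere 0 1"] null_setsI) (auto simp: sphere_finite_def)
  then show ?thesis using h by (simp add: good_def sphere_finite_def)
qed

lemma P_int:
  assumes "sphere_prob (\<mu>::'a::euclidean_space measure)"
  shows "integrable (PiM UNIV (\<lambda>_::'k::finite. \<mu>)) (\<lambda>z. Qc z a b)"
proof -
  let ?P = "PiM UNIV (\<lambda>_::'k. \<mu>)"
  let ?S = "{z::'k \<Rightarrow> 'a. \<forall>i. z i \<in> sphere 0 1}"
  have p\<mu>: "prob_space \<mu>" using assms by (simp add: sphere_prob_def)
  have s\<mu>: "sets \<mu> = sets borel" using assms by (simp add: sphere_prob_def)
  interpret P: prob_space ?P by (rule prob_space_PiM) (use p\<mu> in auto)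
  have sP: "sets ?P = sets (borel :: ('k \<Rightarrow> 'a) measure)"
  proof -
    have "sets ?P = sets (PiM UNIV (\<lambda>_::'k. (borel::'a measure)))"
      by (rule sets_PiM_cong) (use s\<mu> in auto)
    also have "\<dots> = sets borel" by (rule sets_PiM_equal_borel)
    finally show ?thesis .
  qed
  have m: "(\<lambda>z. Qc z a b) \<in> borel_measurable ?P"
    unfolding Qc_def by (subst measurable_cong_sets[OF sP refl]) (rule borel_measurable_continuous_onI[OF cont_Qz])
  have cpt: "compact ?S"
  proof -
    have "compactin (product_topology (\<lambda>_. euclidean) UNIV) (PiE UNIV (\<lambda>_::'k. sphere (0::'a) 1))"
      by (simp add: compactin_PiE)
    then have "compact (PiE UNIV (\<lambda>_::'k. sphere (0::'a) 1))"
      by (metis compactin_euclidean_iff euclidean_product_topology)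
    moreover have "PiE UNIV (\<lambda>_::'k. sphere (0::'a) 1) = ?S"
      by (auto simp: PiE_UNIV_domain)
    ultimately show ?thesis by metis
  qed
  have "bounded ((\<lambda>z. Q_kernel a b z) ` ?S)"
    by (rule compact_imp_bounded, rule compact_continuous_image[OF continuous_on_subset[OF cont_Qz] cpt]) simp
  then obtain B where B: "\<And>z. z \<in> ?S \<Longrightarrow> norm (Qc z a b) \<le> B"
    by (auto simp: bounded_iff Qc_def)
  have ae: "AE z in ?P. \<forall>i\<in>UNIV. z i \<in> sphere 0 1"
  proof (rule AE_finite_allI, simp)
    fix i :: 'k
    have d: "distr ?P \<mu> (\<lambda>\<omega>. \<omega> i) = \<mu>" by (rule distr_PiM_component) (use p\<mu> in auto)
    have "AE x in \<mu>. x \<in> sphere 0 1" using sphere_prob_good[OF assms] good_def by auto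
    then have "AE x in distr ?P \<mu> (\<lambda>\<omega>. \<omega> i). x \<in> sphere 0 1" by (simp only: d)
    moreover have "{x \<in> space \<mu>. x \<in> sphere 0 1} \<in> sets \<mu>"
      using s\<mu> sets_eq_imp_space_eq[OF s\<mu>] by simp
    ultimately show "AE z in ?P. z i \<in> sphere 0 1"
      by (subst (asm) AE_distr_iff) (auto simp: measurable_component_singleton)
  qed
  have "AE z in ?P. norm (Qc z a b) \<le> B"
    using ae by eventually_elim (use B in auto)
  then show ?thesis using m by (rule P.integrable_const_bound)
qed

definition vm :: "'a::euclidean_space measure \<Rightarrow> 'a" where
  "vm M = (\<Sum>a\<in>Basis. mean M a *\<^sub>R a)"

lemma vm_inner: "a \<in> Basis \<Longrightarrow> vm M \<bullet> a = mean M a"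
  by (simp add: vm_def inner_sum_left inner_Basis if_distrib sum.delta cong: if_cong)

lemma energy:
  assumes \<mu>: "sphere_prob (\<mu>::'a::euclidean_space measure)"
  shows "kernel_energy (Q_kernel :: 'a \<Rightarrow> 'a \<Rightarrow> ('k::finite \<Rightarrow> 'a) \<Rightarrow> real) \<mu>
       = (\<integral>z. Q_kernel (vm \<mu>) (vm \<mu>) z \<partial>(PiM UNIV (\<lambda>_::'k. \<mu>)))"
proof -
  let ?P = "PiM UNIV (\<lambda>_::'k. \<mu>)"
  define N where "N a b = (\<integral>z. Qc z a b \<partial>?P)" for a b
  have inner: "(\<integral>z. Q_kernel x y z \<partial>?P) = (\<Sum>a\<in>Basis. \<Sum>b\<in>Basis. (x \<bullet> a) * (y \<bullet> b) * N a b)" for x y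
  proof -
    have "(\<integral>z. Q_kernel x y z \<partial>?P) = (\<integral>z. (\<Sum>a\<in>Basis. \<Sum>b\<in>Basis. (x \<bullet> a) * (y \<bullet> b) * Qc z a b) \<partial>?P)"
      by (simp only: Q_expand)
    also have "\<dots> = (\<Sum>a\<in>Basis. (\<integral>z. (\<Sum>b\<in>Basis. (x \<bullet> a) * (y \<bullet> b) * Qc z a b) \<partial>?P))"
      by (rule Bochner_Integration.integral_sum[where f="\<lambda>a z. \<Sum>b\<in>Basis. (x \<bullet> a) * (y \<bullet> b) * Qc z a b"])
         (intro Bochner_Integration.integrable_sum integrable_mult_right P_int[OF \<mu>])
    also have "\<dots> = (\<Sum>a\<in>Basis. \<Sum>b\<in>Basis. (\<integral>z. (x \<bullet> a) * (y \<bullet> b) * Qc z a b \<partial>?P))"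
      by (intro sum.cong refl Bochner_Integration.integral_sum[where f="\<lambda>b z. (x \<bullet> _) * (y \<bullet> b) * Qc z _ b"])
         (intro integrable_mult_right P_int[OF \<mu>])
    also have "\<dots> = (\<Sum>a\<in>Basis. \<Sum>b\<in>Basis. (x \<bullet> a) * (y \<bullet> b) * N a b)"
      by (simp add: N_def)
    finally show ?thesis .
  qed
  have "kernel_energy (Q_kernel :: 'a \<Rightarrow> 'a \<Rightarrow> ('k \<Rightarrow> 'a) \<Rightarrow> real) \<mu>
      = (\<integral>x. (\<integral>y. (\<Sum>a\<in>Basis. \<Sum>b\<in>Basis. (x \<bullet> a) * (y \<bullet> b) * N a b) \<partial>\<mu>) \<partial>\<mu>)"
    by (simp add: kernel_energy_def inner)
  also have "\<dots> = (\<Sum>a\<in>Basis. \<Sum>b\<in>Basis. mean \<mu> a * mean \<mu> b * N a b)"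
    by (rule good_double[OF sphere_prob_good[OF \<mu>] sphere_prob_good[OF \<mu>]])
  also have "\<dots> = (\<Sum>a\<in>Basis. \<Sum>b\<in>Basis. (vm \<mu> \<bullet> a) * (vm \<mu> \<bullet> b) * N a b)"
    by (intro sum.cong refl) (simp add: vm_inner)
  also have "\<dots> = (\<integral>z. Q_kernel (vm \<mu>) (vm \<mu>) z \<partial>?P)"
    by (rule inner[symmetric])
  finally show ?thesis .
qed

abbreviation U :: "'a::euclidean_space measure" where
  "U \<equiv> uniform_measure lborel (ball 0 1)"

lemma ball_pos: "emeasure lborel (ball (0::'a::euclidean_space) 1) \<noteq> 0"
proof -
  have "0 < unit_ball_vol (real DIM('a))" by (rule unit_ball_vol_pos) simp
  then have "unit_ball_vol (real DIM('a)) \<noteq> 0" by linarith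
  then show ?thesis by (simp add: emeasure_ball)
qed

lemma ball_fin: "emeasure lborel (ball (0::'a::euclidean_space) 1) \<noteq> \<infinity>"
  using emeasure_lborel_ball_finite[of "0::'a" 1] by simp

lemma U_prob: "prob_space (U :: 'a::euclidean_space measure)"
  by (rule prob_space_uniform_measure[OF ball_pos ball_fin])

lemma sgn_meas: "sgn \<in> measurable (U :: 'a::euclidean_space measure) borel"
  by (subst measurable_cong_sets[of _ borel]) auto

lemma sigma_prob: "sphere_prob (sphere_measure :: 'a::euclidean_space measure)"
proof -
  have p: "prob_space (sphere_measure :: 'a measure)"
    unfolding sphere_measure_def by (rule prob_space.prob_space_distr[OF U_prob sgn_meas])
  have "emeasure (sphere_measure :: 'a measure) (sphere 0 1) = emeasure (U::'a measure) (sgn -` sphere 0 1 \<inter> space U)"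
    unfolding sphere_measure_def by (rule emeasure_distr[OF sgn_meas]) simp
  also have "sgn -` sphere 0 1 \<inter> space (U::'a measure) = UNIV - {0}"
    by (auto simp: norm_sgn)
  also have "emeasure (U::'a measure) (UNIV - {0}) = emeasure lborel (ball (0::'a) 1 - {0}) / emeasure lborel (ball (0::'a) 1)"
    by (subst emeasure_uniform_measure) (auto simp: Diff_eq)
  also have "emeasure lborel (ball (0::'a) 1 - {0}) = emeasure lborel (ball (0::'a) 1)"
    by (rule emeasure_Diff_null_set) (auto intro: null_setsI)
  also have "\<dots> / \<dots> = 1"
    by (rule ennreal_divide_self) (use ball_pos ball_fin in \<open>auto simp: top.not_eq_extremum\<close>)
  finally show ?thesis using p by (simp add: sphere_prob_def sphere_measure_def)
qed

lemma lborel_neg: "distr lborel borel uminus = (lborel :: 'a::euclidean_space measure)"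
proof -
  have "(lborel :: 'a measure) = distr lborel borel uminus"
    using lborel_affine[of "-1::real" "0::'a"] by (simp add: density_1)
  then show ?thesis by simp
qed

lemma U_sym: "distr U borel uminus = (U :: 'a::euclidean_space measure)"
proof (rule measure_eqI)
  show "sets (distr U borel uminus) = sets (U::'a measure)" by simp
next
  fix A :: "'a set" assume "A \<in> sets (distr U borel uminus)"
  then have A: "A \<in> sets borel" by simp
  have mA: "uminus -` A \<in> sets borel" by (rule measurable_sets_borel[OF _ A]) simp
  have mA2: "uminus -` (ball 0 1 \<inter> A) \<in> sets borel" by (rule measurable_sets_borel[OF _ sets.Int[OF _ A]]) simp_all
  have um: "uminus \<in> measurable (U::'a measure) borel"
    by (subst measurable_cong_sets[of _ borel]) auto
  have "emeasure (distr U borel uminus) A = emeasure (U::'a measure) (uminus -` A)"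
    by (subst emeasure_distr[OF um A]) simp
  also have "\<dots> = emeasure lborel (ball 0 1 \<inter> uminus -` A) / emeasure lborel (ball (0::'a) 1)"
    using A mA by (subst emeasure_uniform_measure) auto
  also have "ball 0 1 \<inter> uminus -` A = uminus -` (ball (0::'a) 1 \<inter> A)"
    by auto
  also have "emeasure lborel (uminus -` (ball (0::'a) 1 \<inter> A)) = emeasure (distr lborel borel uminus) (ball (0::'a) 1 \<inter> A)"
    using A by (subst emeasure_distr) (auto intro!: measurable_sets_borel[OF _ A])
  also have "\<dots> = emeasure lborel (ball (0::'a) 1 \<inter> A)" by (simp add: lborel_neg)
  also have "\<dots> / emeasure lborel (ball (0::'a) 1) = emeasure U A"
    using A mA by (subst emeasure_uniform_measure) auto
  finally show "emeasure (distr U borel uminus) A = emeasure U A" .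
qed

lemma mean_sigma: "mean (sphere_measure :: 'a::euclidean_space measure) a = 0"
proof -
  have f: "(\<lambda>x::'a. x \<bullet> a) \<in> borel_measurable borel"
    by (intro borel_measurable_continuous_onI continuous_intros)
  have g: "(\<lambda>x::'a. sgn x \<bullet> a) \<in> borel_measurable borel"
    by measurable
  have um: "uminus \<in> measurable (U::'a measure) borel"
    by (subst measurable_cong_sets[of _ borel]) auto
  have "mean (sphere_measure :: 'a measure) a = (\<integral>x. sgn x \<bullet> a \<partial>(U::'a measure))"
    unfolding mean_def sphere_measure_def by (rule integral_distr[OF sgn_meas f])
  also have "\<dots> = (\<integral>x. sgn x \<bullet> a \<partial>(distr U borel uminus))" by (simp only: U_sym)
  also have "\<dots> = (\<integral>x. sgn (-x) \<bullet> a \<partial>(U::'a measure))"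
    by (rule integral_distr[OF um g])
  also have "\<dots> = - (\<integral>x. sgn x \<bullet> a \<partial>(U::'a measure))"
    by (simp add: sgn_minus)
  finally have "(\<integral>x. sgn x \<bullet> a \<partial>(U::'a measure)) = 0"
    by (smt (verit) \<open>mean sphere_measure a = (\<integral>x. sgn x \<bullet> a \<partial>U)\<close>
        \<open>(\<integral>x. sgn x \<bullet> a \<partial>U) = (\<integral>x. sgn x \<bullet> a \<partial>distr U borel uminus)\<close>
        \<open>(\<integral>x. sgn x \<bullet> a \<partial>distr U borel uminus) = (\<integral>x. sgn (-x) \<bullet> a \<partial>U)\<close>
        \<open>(\<integral>x. sgn (-x) \<bullet> a \<partial>U) = - (\<integral>x. sgn x \<bullet> a \<partial>U)\<close>)
  then show ?thesis
    using \<open>mean sphere_measure a = (\<integral>x. sgn x \<bullet> a \<partial>U)\<close> by simp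
qed

lemma Q_zero: "Q_kernel 0 0 (z::'k::finite \<Rightarrow> 'a::euclidean_space) = 0"
proof -
  have "((\<chi> i. 0)::real^'k) = 0" by (simp add: vec_eq_iff)
  then have "wv 0 z = (0::real^'k)" by (simp add: wv_def)
  then show ?thesis by (simp add: Q_alt)
qed

lemma vm_sigma: "vm (sphere_measure :: 'a::euclidean_space measure) = 0"
  by (simp add: vm_def mean_sigma)

lemma sum4:
  fixes p q :: "'b \<Rightarrow> real"
  shows "(\<Sum>a\<in>A. \<Sum>b\<in>A. (p a - q a) * (p b - q b) * c a b) =
    (\<Sum>a\<in>A. \<Sum>b\<in>A. p a * p b * c a b) - (\<Sum>a\<in>A. \<Sum>b\<in>A. p a * q b * c a b)
    - (\<Sum>a\<in>A. \<Sum>b\<in>A. q a * p b * c a b) + (\<Sum>a\<in>A. \<Sum>b\<in>A. q a * q b * c a b)"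
  by (simp add: sum_subtractf[symmetric] sum.distrib[symmetric] algebra_simps)

lemma kpos_ineq:
  assumes g1: "good (\<nu>1 :: 'a::euclidean_space measure)" and g2: "good \<nu>2"
  shows "0 \<le> (\<integral>x. (\<integral>y. Q_kernel x y z \<partial>\<nu>1) \<partial>\<nu>1) - (\<integral>x. (\<integral>y. Q_kernel x y z \<partial>\<nu>2) \<partial>\<nu>1)
              - (\<integral>x. (\<integral>y. Q_kernel x y z \<partial>\<nu>1) \<partial>\<nu>2) + (\<integral>x. (\<integral>y. Q_kernel x y z \<partial>\<nu>2) \<partial>\<nu>2)"
proof -
  let ?c = "Qc z"
  have e: "(\<integral>x. (\<integral>y. Q_kernel x y z \<partial>M1) \<partial>M2) = (\<Sum>a\<in>Basis. \<Sum>b\<in>Basis. mean M2 a * mean M1 b * ?c a b)"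
    if "good M1" "good M2" for M1 M2
    by (simp only: Q_expand) (rule good_double[OF that])
  define v where "v = vm \<nu>1 - vm \<nu>2"
  have vi: "v \<bullet> a = mean \<nu>1 a - mean \<nu>2 a" if "a \<in> Basis" for a
    using that by (simp add: v_def inner_diff_left vm_inner)
  have "Q_kernel v v z = (\<Sum>a\<in>Basis. \<Sum>b\<in>Basis. (v \<bullet> a) * (v \<bullet> b) * ?c a b)"
    by (rule Q_expand)
  also have "\<dots> = (\<Sum>a\<in>Basis. \<Sum>b\<in>Basis. (mean \<nu>1 a - mean \<nu>2 a) * (mean \<nu>1 b - mean \<nu>2 b) * ?c a b)"
    by (intro sum.cong refl) (simp add: vi)
  also have "\<dots> = (\<Sum>a\<in>Basis. \<Sum>b\<in>Basis. mean \<nu>1 a * mean \<nu>1 b * ?c a b)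
       - (\<Sum>a\<in>Basis. \<Sum>b\<in>Basis. mean \<nu>1 a * mean \<nu>2 b * ?c a b)
       - (\<Sum>a\<in>Basis. \<Sum>b\<in>Basis. mean \<nu>2 a * mean \<nu>1 b * ?c a b)
       + (\<Sum>a\<in>Basis. \<Sum>b\<in>Basis. mean \<nu>2 a * mean \<nu>2 b * ?c a b)"
    by (rule sum4)
  finally have "Q_kernel v v z = \<dots>" .
  then show ?thesis using Q_psd[of v z] unfolding e[OF g1 g1] e[OF g2 g1] e[OF g1 g2] e[OF g2 g2] by linarith
qed

lemma cont_Q2:
  "continuous_on (sphere 0 1 \<times> sphere 0 1 \<times> {z::'k::finite \<Rightarrow> 'a::euclidean_space. \<forall>i. z i \<in> sphere 0 1}) (\<lambda>(x, y, z). Q_kernel x y z)"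
proof -
  have e: "(\<lambda>(x, y, z). Q_kernel x y z) = (\<lambda>p::'a \<times> 'a \<times> ('k \<Rightarrow> 'a). Q_kernel (fst p) (fst (snd p)) (snd (snd p)))"
    by (auto simp: fun_eq_iff)
  show ?thesis unfolding e by (rule continuous_on_subset[OF cont_Q]) simp
qed

lemma kpos: "k_pos_def (Q_kernel :: 'a::euclidean_space \<Rightarrow> 'a \<Rightarrow> ('k::finite \<Rightarrow> 'a) \<Rightarrow> real)"
  unfolding k_pos_def_def
proof (intro conjI)
  show "\<forall>x y z. Q_kernel x y z = Q_kernel y x (z::'k \<Rightarrow> 'a)" using Q_symm by blast
  show "\<forall>z::'k \<Rightarrow> 'a. (\<forall>i. z i \<in> sphere 0 1) \<longrightarrow>
        (\<forall>\<nu>1 \<nu>2. sphere_finite \<nu>1 \<and> sphere_finite \<nu>2 \<longrightarrow>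
           0 \<le> (\<integral>x. (\<integral>y. Q_kernel x y z \<partial>\<nu>1) \<partial>\<nu>1) - (\<integral>x. (\<integral>y. Q_kernel x y z \<partial>\<nu>2) \<partial>\<nu>1)
              - (\<integral>x. (\<integral>y. Q_kernel x y z \<partial>\<nu>1) \<partial>\<nu>2) + (\<integral>x. (\<integral>y. Q_kernel x y z \<partial>\<nu>2) \<partial>\<nu>2))"
    using kpos_ineq sphere_finite_good by blast
qed (rule cont_Q2)

lemma t2: "kernel_energy (Q_kernel :: 'a::euclidean_space \<Rightarrow> 'a \<Rightarrow> ('k::finite \<Rightarrow> 'a) \<Rightarrow> real) sphere_measure = 0"
    by (simp add: energy[OF sigma_prob] vm_sigma Q_zero)
lemma t3: "sphere_prob \<mu> \<Longrightarrow> 0 \<le> kernel_energy (Q_kernel :: 'a::euclidean_space \<Rightarrow> 'a \<Rightarrow> ('k::finite \<Rightarrow> 'a) \<Rightarrow> real) \<mu>"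
    by (simp add: energy Q_psd)

theorem lemma6p2:
  assumes "CARD('k::finite) + 1 \<le> DIM('a::euclidean_space)"
  shows "k_pos_def (Q_kernel :: 'a \<Rightarrow> 'a \<Rightarrow> ('k \<Rightarrow> 'a) \<Rightarrow> real)
     \<and> sphere_prob (sphere_measure :: 'a measure)
     \<and> (\<forall>\<mu>::'a measure. sphere_prob \<mu> \<longrightarrow>
          kernel_energy (Q_kernel :: 'a \<Rightarrow> 'a \<Rightarrow> ('k \<Rightarrow> 'a) \<Rightarrow> real) sphere_measure
            \<le> kernel_energy (Q_kernel :: 'a \<Rightarrow> 'a \<Rightarrow> ('k \<Rightarrow> 'a) \<Rightarrow> real) \<mu>)"
  using kpos sigma_prob t2 t3 by (metis (no_types, lifting))

end
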